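(* Let $n\ge 5$ and let $x,y$ be adjacent vertices of $Q_n$ with $f_n(x)+f_n(y)=\operatorname{str}_{f_n}(Q_n)$. If $x$ and $y$ both begin with the bit $0$, then $$\operatorname{str}_{f_n}(Q_n)\le \operatorname{str}_{f_{n-2}}(Q_{n-2})+3\cdot 2^{n-2}+\binom{n-3}{\lceil (n-3)/2\rceil}+\binom{n-2}{\lceil (n-2)/2\rceil}.$$
   Context: $Q_n$ is the $n$-dimensional hypercube: vertices are the $n$-bit strings, adjacent iff they differ in exactly one position. For a bijection $f:V(G)\to\{1,\dots,|V(G)|\}$, $\operatorname{str}_f(G)=\max\{f(u)+f(v):uv\in E(G)\}$. An $n$-bit string is $x_1\cdots x_n$, $x_i\in\{0,1\}$; its weight is its number of $1$s. Lexicographic order: $x<y$ if for some $k$, $x_j=y_j$ for $j<k$ and $x_k<y_k$. $S_n^i$ is the sequence of $n$-bit strings of weight $i$ in increasing lexicographic order; $R_n^i$ is the same set in decreasing lexicographic order. $S_n$ is the concatenation $(R_n^1,R_n^3,\dots,R_n^{n-1},S_n^n,S_n^{n-2},\dots,S_n^2,S_n^0)$ for even $n$ and $(R_n^1,R_n^3,\dots,R_n^{n-2},R_n^n,S_n^{n-1},\dots,S_n^2,S_n^0)$ for odd $n$; $f_n$ maps the string in position $j$ of $S_n$ to $j$. *)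

theory Defs
  imports Complex_Main
begin

text \<open>n-bit strings are bool lists of length n (False = bit 0, True = bit 1).\<close>

definition bitstrings :: "nat \<Rightarrow> bool list set" where
  "bitstrings n = {xs. length xs = n}"

definition weight :: "bool list \<Rightarrow> nat" where
  "weight xs = length (filter id xs)"

definition cube_adj :: "bool list \<Rightarrow> bool list \<Rightarrow> bool" where
  "cube_adj x y \<longleftrightarrow> length x = length y \<and>
     card {i. i < length x \<and> x ! i \<noteq> y ! i} = 1"

definition lex_less :: "bool list \<Rightarrow> bool list \<Rightarrow> bool" where
  "lex_less x y \<longleftrightarrow> (\<exists>k. k < length x \<and> k < length y \<and>
      (\<forall>j<k. x ! j = y ! j) \<and> \<not> x ! k \<and> y ! k)"

definition S_seq :: "nat \<Rightarrow> nat \<Rightarrow> bool list list" where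
  "S_seq n i = (THE l. set l = {x \<in> bitstrings n. weight x = i} \<and> distinct l \<and>
                      sorted_wrt lex_less l)"

definition R_seq :: "nat \<Rightarrow> nat \<Rightarrow> bool list list" where
  "R_seq n i = rev (S_seq n i)"

definition full_seq :: "nat \<Rightarrow> bool list list" where
  "full_seq n =
    (if even n then
       concat (map (R_seq n) (filter odd [1..<n])) @ S_seq n n @
       concat (map (S_seq n) (rev (filter even [0..<n-1]))) 
     else
       concat (map (R_seq n) (filter odd [1..<n-1])) @ R_seq n n @
       concat (map (S_seq n) (rev (filter even [0..<n]))))"

definition f_lab :: "nat \<Rightarrow> bool list \<Rightarrow> nat" where
  "f_lab n x = Suc (THE j. j < length (full_seq n) \<and> full_seq n ! j = x)"

definition cube_str :: "(bool list \<Rightarrow> nat) \<Rightarrow> nat \<Rightarrow> nat" where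
  "cube_str f n = Max {f u + f v | u v. u \<in> bitstrings n \<and> v \<in> bitstrings n \<and> cube_adj u v}"

end

theory Submission
  imports Defs "HOL-Library.List_Lexorder"
begin

lemma lex_less_Nil1[simp]: "\<not> lex_less [] y" by (simp add: lex_less_def)
lemma lex_less_Nil2[simp]: "\<not> lex_less x []" by (simp add: lex_less_def)

lemma lex_less_Cons[simp]:
  "lex_less (a#p) (b#q) \<longleftrightarrow> (\<not>a \<and> b) \<or> (a = b \<and> lex_less p q)"
proof
  assume "lex_less (a#p) (b#q)"
  then obtain k where k: "k < length (a#p)" "k < length (b#q)"
     "\<forall>j<k. (a#p)!j = (b#q)!j" "\<not>(a#p)!k" "(b#q)!k" unfolding lex_less_def by blast
  show "(\<not>a \<and> b) \<or> (a = b \<and> lex_less p q)"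
  proof (cases k)
    case 0 then show ?thesis using k by simp
  next
    case (Suc k')
    have "a = b" using k(3) Suc by force
    moreover have "\<forall>j<k'. p!j = q!j" using k(3) Suc by (metis Suc_mono nth_Cons_Suc)
    then have "lex_less p q" unfolding lex_less_def
      using k Suc by (intro exI[of _ k']) auto
    ultimately show ?thesis by simp
  qed
next
  assume h: "(\<not>a \<and> b) \<or> (a = b \<and> lex_less p q)"
  show "lex_less (a#p) (b#q)"
  proof (cases "\<not>a \<and> b")
    case True then show ?thesis unfolding lex_less_def by (intro exI[of _ 0]) auto
  next
    case False
    with h have "a = b" "lex_less p q" by auto
    then obtain k where k: "k < length p" "k < length q"
     "\<forall>j<k. p!j = q!j" "\<not>p!k" "q!k" unfolding lex_less_def by blast
    have "\<forall>j<Suc k. (a#p)!j = (b#q)!j" using k(3) \<open>a=b\<close> by (auto simp: nth_Cons split: nat.split)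
    then have "Suc k < length (a#p) \<and> Suc k < length (b#q) \<and> (\<forall>j<Suc k. (a#p)!j = (b#q)!j) \<and> \<not>(a#p)!Suc k \<and> (b#q)!Suc k"
      using k by simp
    then show ?thesis unfolding lex_less_def by blast
  qed
qed

lemma lex_less_imp_less: "lex_less a b \<Longrightarrow> a < b"
proof (induction a arbitrary: b)
  case Nil then show ?case by simp
next
  case (Cons x a) then show ?case by (cases b) (auto simp: less_bool_def)
qed

lemma less_imp_lex_less: "length a = length b \<Longrightarrow> a < b \<Longrightarrow> lex_less a b"
proof (induction a arbitrary: b)
  case Nil then show ?case by simp
next
  case (Cons x a) then show ?case by (cases b) (auto simp: less_bool_def)
qed

lemma lex_less_irrefl[simp]: "\<not> lex_less a a"
  using lex_less_imp_less by blast

lemma lex_less_trans: "lex_less a b \<Longrightarrow> lex_less b c \<Longrightarrow> lex_less a c"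
proof (induction a arbitrary: b c)
  case Nil then show ?case by simp
next
  case (Cons x a)
  obtain y b' where b: "b = y # b'" using Cons.prems by (cases b) auto
  obtain z c' where c: "c = z # c'" using Cons.prems by (cases c) auto
  have 1: "(\<not>x \<and> y) \<or> (x = y \<and> lex_less a b')" using Cons.prems(1) b by simp
  have 2: "(\<not>y \<and> z) \<or> (y = z \<and> lex_less b' c')" using Cons.prems(2) b c by simp
  have "(\<not>x \<and> z) \<or> (x = z \<and> lex_less a c')"
    using 1 2 Cons.IH by blast
  then show ?case using c by simp
qed

lemma lex_less_total: "length a = length b \<Longrightarrow> a \<noteq> b \<Longrightarrow> lex_less a b \<or> lex_less b a"
  using less_imp_lex_less[of a b] less_imp_lex_less[of b a] neq_iff by auto

lemma bitstrings_finite[simp]: "finite (bitstrings n)"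
  unfolding bitstrings_def using finite_lists_length_eq[of "UNIV::bool set" n] by simp

lemma card_bitstrings: "card (bitstrings n) = 2^n"
  unfolding bitstrings_def using card_lists_length_eq[of "UNIV::bool set" n] by simp

lemma S_seq_props: "set (S_seq n i) = {x \<in> bitstrings n. weight x = i} \<and> distinct (S_seq n i) \<and>
                      sorted_wrt lex_less (S_seq n i)"
proof -
  let ?A = "{x \<in> bitstrings n. weight x = i}"
  have fin: "finite ?A" by simp
  obtain xs where xs: "sorted_wrt (<) xs" "set xs = ?A"
    using ex1_sorted_list_for_set_if_finite[OF fin] by blast
  have len: "\<forall>a\<in>set xs. length a = n" using xs(2) by (auto simp: bitstrings_def)
  have P: "set xs = ?A \<and> distinct xs \<and> sorted_wrt lex_less xs"
  proof (intro conjI)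
    show "distinct xs" using xs(1) by (simp add: strict_sorted_iff)
    show "sorted_wrt lex_less xs"
      using xs(1) len by (induction xs) (auto intro: less_imp_lex_less)
    show "set xs = ?A" by (rule xs(2))
  qed
  have U: "ys = xs" if "set ys = ?A \<and> distinct ys \<and> sorted_wrt lex_less ys" for ys
  proof -
    have "sorted_wrt (<) ys" using that sorted_wrt_mono_rel[of ys lex_less "(<)"]
      lex_less_imp_less by blast
    moreover have "set ys = set xs" using that xs(2) by simp
    ultimately show ?thesis using strict_sorted_equal[OF xs(1)] by blast
  qed
  have "S_seq n i = xs" unfolding S_seq_def
    by (rule the_equality) (use P U in blast)+
  then show ?thesis using P by simp
qed

definition before :: "bool list \<Rightarrow> bool list \<Rightarrow> bool" where
 "before z x \<longleftrightarrow> (odd (weight z) \<and> even (weight x)) \<or>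
    (odd (weight z) \<and> odd (weight x) \<and> (weight z < weight x \<or> (weight z = weight x \<and> lex_less x z))) \<or>
    (even (weight z) \<and> even (weight x) \<and> (weight x < weight z \<or> (weight z = weight x \<and> lex_less z x)))"

lemma before_irrefl: "\<not> before a a" unfolding before_def by auto

lemma before_trans: "before a b \<Longrightarrow> before b c \<Longrightarrow> before a c"
  unfolding before_def using lex_less_trans by (smt (verit) order_less_trans)

lemma index_card:
  assumes "sorted_wrt R xs" "\<And>a. \<not>R a a" "\<And>a b c. R a b \<Longrightarrow> R b c \<Longrightarrow> R a c"
    "distinct xs" "i < length xs"
  shows "card {z \<in> set xs. R z (xs!i)} = i"
proof -
  have "{z \<in> set xs. R z (xs!i)} = set (take i xs)"
  proof
    show "set (take i xs) \<subseteq> {z \<in> set xs. R z (xs!i)}"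
    proof
      fix z assume "z \<in> set (take i xs)"
      then obtain j where j: "j < i" "z = xs!j" using assms(5)
        by (auto simp: in_set_conv_nth)
      then show "z \<in> {z \<in> set xs. R z (xs!i)}"
        using assms(1,5) sorted_wrt_nth_less[of R xs j i] by auto
    qed
    show "{z \<in> set xs. R z (xs!i)} \<subseteq> set (take i xs)"
    proof
      fix z assume z: "z \<in> {z \<in> set xs. R z (xs!i)}"
      then obtain j where j: "j < length xs" "z = xs!j" by (auto simp: in_set_conv_nth)
      have "j < i"
      proof (rule ccontr)
        assume "\<not> j < i"
        then consider "j = i" | "i < j" by linarith
        then show False
        proof cases
          case 1 then show False using z j assms(2) by auto
        next
          case 2 then have "R (xs!i) (xs!j)" using assms(1) j sorted_wrt_nth_less by blast
          then show False using z j assms(2,3) by blast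
        qed
      qed
      then show "z \<in> set (take i xs)" using j assms(5)
        by (metis in_set_conv_nth length_take min_less_iff_conj nth_take)
    qed
  qed
  then show ?thesis using assms(4,5) by (simp add: distinct_card)
qed

lemma sorted_wrt_concat_map:
  "sorted_wrt Q ix \<Longrightarrow> (\<And>i. i\<in>set ix \<Longrightarrow> sorted_wrt R (g i)) \<Longrightarrow>
   (\<And>i j a b. i\<in>set ix \<Longrightarrow> j \<in> set ix \<Longrightarrow> Q i j \<Longrightarrow> a \<in> set (g i) \<Longrightarrow> b \<in> set (g j) \<Longrightarrow> R a b)
   \<Longrightarrow> sorted_wrt R (concat (map g ix))"
proof (induction ix)
  case Nil then show ?case by simp
next
  case (Cons i0 ix)
  show ?case unfolding concat.simps list.map sorted_wrt_append
  proof (intro conjI)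
    show "sorted_wrt R (g i0)" using Cons.prems by simp
    show "sorted_wrt R (concat (map g ix))"
    proof (rule Cons.IH)
      show "sorted_wrt Q ix" using Cons.prems(1) by simp
      show "sorted_wrt R (g i)" if "i \<in> set ix" for i using Cons.prems(2) that by simp
      show "R a b" if "i \<in> set ix" "j \<in> set ix" "Q i j" "a \<in> set (g i)" "b \<in> set (g j)" for i j a b
        using Cons.prems(3)[of i j a b] that by simp
    qed
    show "\<forall>x\<in>set (g i0). \<forall>y\<in>set (concat (map g ix)). R x y"
    proof (intro ballI)
      fix x y assume x: "x \<in> set (g i0)" and y: "y \<in> set (concat (map g ix))"
      then obtain j where j: "j \<in> set ix" "y \<in> set (g j)" by auto
      have "Q i0 j" using Cons.prems(1) j by simp
      then show "R x y" using Cons.prems(3)[of i0 j x y] x j by simp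
    qed
  qed
qed

lemma S_set: "a \<in> set (S_seq n i) \<longleftrightarrow> a \<in> bitstrings n \<and> weight a = i"
  using S_seq_props by auto
lemma R_set: "a \<in> set (R_seq n i) \<longleftrightarrow> a \<in> bitstrings n \<and> weight a = i"
  using S_seq_props by (auto simp: R_seq_def)
lemma S_sorted: "sorted_wrt lex_less (S_seq n i)" using S_seq_props by auto
lemma R_sorted: "sorted_wrt (\<lambda>a b. lex_less b a) (R_seq n i)"
  using S_seq_props by (auto simp: R_seq_def sorted_wrt_rev)

lemma weight_le: "weight x \<le> length x"
  unfolding weight_def by (rule length_filter_le)

lemma sorted_R_block: "odd i \<Longrightarrow> sorted_wrt before (R_seq n i)"
  using R_sorted[of n i] by (rule sorted_wrt_mono_rel[rotated]) (auto simp: before_def R_set)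

lemma sorted_S_block: "even i \<Longrightarrow> sorted_wrt before (S_seq n i)"
  using S_sorted[of n i] by (rule sorted_wrt_mono_rel[rotated]) (auto simp: before_def S_set)

lemma sorted_R_part: "(\<And>i. i \<in> set ix \<Longrightarrow> odd i) \<Longrightarrow> sorted_wrt (<) ix \<Longrightarrow>
    sorted_wrt before (concat (map (R_seq n) ix))"
  by (rule sorted_wrt_concat_map[where Q="(<)"])
     (auto simp: sorted_R_block R_set before_def)

lemma sorted_S_part: "(\<And>i. i \<in> set ix \<Longrightarrow> even i) \<Longrightarrow> sorted_wrt (>) ix \<Longrightarrow>
    sorted_wrt before (concat (map (S_seq n) ix))"
  by (rule sorted_wrt_concat_map[where Q="(>)"])
     (auto simp: sorted_S_block S_set before_def)

lemma full_sorted: "sorted_wrt before (full_seq n)"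
proof (cases "even n")
  case True
  have s1: "sorted_wrt (<) (filter odd [1..<n])" by (intro sorted_wrt_filter) (simp add: sorted_wrt_upt)
  have s2: "sorted_wrt (>) (rev (filter even [0..<n-1]))"
    by (simp add: sorted_wrt_rev sorted_wrt_filter sorted_wrt_upt)
  have p1: "sorted_wrt before (concat (map (R_seq n) (filter odd [1..<n])))"
    by (rule sorted_R_part) (use s1 in auto)
  have p2: "sorted_wrt before (concat (map (S_seq n) (rev (filter even [0..<n-1]))))"
    by (rule sorted_S_part) (use s2 in auto)
  have p3: "sorted_wrt before (S_seq n n)" by (rule sorted_S_block) (use True in simp)
  show ?thesis using True unfolding full_seq_def
    using p1 p2 p3 by (auto simp: sorted_wrt_append R_set S_set before_def)
next
  case False
  have s1: "sorted_wrt (<) (filter odd [1..<n-1])" by (intro sorted_wrt_filter) (simp add: sorted_wrt_upt)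
  have s2: "sorted_wrt (>) (rev (filter even [0..<n]))"
    by (simp add: sorted_wrt_rev sorted_wrt_filter sorted_wrt_upt)
  have p1: "sorted_wrt before (concat (map (R_seq n) (filter odd [1..<n-1])))"
    by (rule sorted_R_part) (use s1 in auto)
  have p2: "sorted_wrt before (concat (map (S_seq n) (rev (filter even [0..<n]))))"
    by (rule sorted_S_part) (use s2 in auto)
  have p3: "sorted_wrt before (R_seq n n)" by (rule sorted_R_block) (use False in simp)
  show ?thesis using False unfolding full_seq_def
    using p1 p2 p3 by (auto simp: sorted_wrt_append R_set S_set before_def)
qed

lemma sorted_irrefl_distinct: "sorted_wrt R xs \<Longrightarrow> (\<And>a. \<not> R a a) \<Longrightarrow> distinct xs"
  by (induction xs) auto

lemma full_distinct: "distinct (full_seq n)"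
  using full_sorted before_irrefl sorted_irrefl_distinct by blast

lemma full_set: "set (full_seq n) = bitstrings n"
proof
  show "set (full_seq n) \<subseteq> bitstrings n"
    unfolding full_seq_def by (auto simp: R_set S_set)
  show "bitstrings n \<subseteq> set (full_seq n)"
  proof
    fix x assume x: "x \<in> bitstrings n"
    have le: "weight x \<le> n" using x weight_le by (auto simp: bitstrings_def)
    show "x \<in> set (full_seq n)"
    proof (cases "even n")
      case True
      then show ?thesis unfolding full_seq_def using x le
        by (cases "even (weight x)"; cases "weight x = n")
           (auto simp: R_set S_set intro!: bexI[of _ "weight x"], presburger+)
    next
      case False
      then show ?thesis unfolding full_seq_def using x le
        by (cases "even (weight x)"; cases "weight x = n")
           (auto simp: R_set S_set intro!: bexI[of _ "weight x"], presburger+)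
    qed
  qed
qed

lemma f_lab_card: assumes "x \<in> bitstrings n"
  shows "f_lab n x = Suc (card {z \<in> bitstrings n. before z x})"
proof -
  let ?xs = "full_seq n"
  obtain i where i: "i < length ?xs" "?xs ! i = x" using assms full_set
    by (metis in_set_conv_nth)
  have "(THE j. j < length ?xs \<and> ?xs ! j = x) = i"
    by (rule the_equality) (use i full_distinct nth_eq_iff_index_eq in auto)
  then have "f_lab n x = Suc i" by (simp add: f_lab_def)
  also have "i = card {z \<in> set ?xs. before z (?xs ! i)}"
    using index_card[OF full_sorted before_irrefl before_trans full_distinct i(1)] by simp
  finally show ?thesis using i full_set by simp
qed

definition rk :: "bool list \<Rightarrow> nat" where
  "rk x = card {z \<in> bitstrings (length x). weight z = weight x \<and> lex_less z x}"

lemma weight_Nil[simp]: "weight [] = 0" by (simp add: weight_def)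
lemma weight_Cons[simp]: "weight (a#z) = (if a then Suc (weight z) else weight z)"
  by (simp add: weight_def)
lemma weight_snoc: "weight (z @ [b]) = weight z + (if b then 1 else 0)"
  by (simp add: weight_def)
lemma weight_Not: "weight (map Not z) + weight z = length z"
  by (induction z) auto

lemma bitstrings_Suc: "bitstrings (Suc m) = Cons False ` bitstrings m \<union> Cons True ` bitstrings m"
proof -
  have "x \<in> Cons False ` bitstrings m \<union> Cons True ` bitstrings m" if "x \<in> bitstrings (Suc m)" for x
    using that by (cases x) (auto simp: bitstrings_def)
  then show ?thesis by (auto simp: bitstrings_def)
qed

lemma bitstrings_0: "bitstrings 0 = {[]}" by (auto simp: bitstrings_def)

lemma card_split: "card {z \<in> bitstrings (Suc m). P z} =
   card {z \<in> bitstrings m. P (False#z)} + card {z \<in> bitstrings m. P (True#z)}"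
proof -
  have e: "{z \<in> bitstrings (Suc m). P z} = Cons False ` {z \<in> bitstrings m. P (False#z)} \<union> Cons True ` {z \<in> bitstrings m. P (True#z)}"
    unfolding bitstrings_Suc by auto
  have "card (Cons False ` {z \<in> bitstrings m. P (False#z)} \<union> Cons True ` {z \<in> bitstrings m. P (True#z)})
     = card (Cons False ` {z \<in> bitstrings m. P (False#z)}) + card (Cons True ` {z \<in> bitstrings m. P (True#z)})"
    by (rule card_Un_disjoint) auto
  also have "\<dots> = card {z \<in> bitstrings m. P (False#z)} + card {z \<in> bitstrings m. P (True#z)}"
    by (simp add: card_image)
  finally show ?thesis using e by simp
qed

lemma card_cls: "card {z \<in> bitstrings m. weight z = k} = m choose k"
proof (induction m arbitrary: k)
  case 0
  have "{z \<in> {[]}. weight z = k} = (if k = 0 then {[]} else {})" by auto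
  then show ?case by (simp add: bitstrings_0)
next
  case (Suc m)
  show ?case
  proof (cases k)
    case 0
    have "card {z \<in> bitstrings m. Suc (weight z) = k} = 0" using 0 by simp
    then show ?thesis using 0 Suc card_split[of m "\<lambda>z. weight z = k"] by simp
  next
    case (Suc j)
    then show ?thesis using Suc.IH card_split[of m "\<lambda>z. weight z = k"] by simp
  qed
qed

lemma length_bs: "z \<in> bitstrings m \<Longrightarrow> length z = m" by (simp add: bitstrings_def)

lemma rk_False[simp]: "rk (False # c) = rk c"
  unfolding rk_def using card_split[of "length c" "\<lambda>z. weight z = weight (False#c) \<and> lex_less z (False#c)"]
  by simp

lemma rk_True[simp]: "rk (True # c) = (length c choose Suc (weight c)) + rk c"
  unfolding rk_def using card_split[of "length c" "\<lambda>z. weight z = weight (True#c) \<and> lex_less z (True#c)"]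
    card_cls[of "length c" "Suc (weight c)"]
  by simp

lemma rk_Nil[simp]: "rk [] = 0" unfolding rk_def by simp

lemma rk_Not: "rk (map Not c) + rk c + 1 = length c choose weight c"
proof (induction c)
  case Nil then show ?case by simp
next
  case (Cons a c)
  have w: "weight (map Not c) + weight c = length c" by (rule weight_Not)
  have wl: "weight c \<le> length c" by (rule weight_le)
  show ?case
  proof (cases a)
    case True
    have sym: "length c choose weight (map Not c) = length c choose weight c"
    proof -
      have "weight (map Not c) = length c - weight c" using w by simp
      then show ?thesis using wl binomial_symmetric[of "weight c" "length c"] by simp
    qed
    have "rk (map Not (a#c)) + rk (a#c) + 1 = rk (map Not c) + (length c choose Suc (weight c)) + rk c + 1"
      using True by simp
    also have "\<dots> = (length c choose weight c) + (length c choose Suc (weight c))" using Cons by simp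
    also have "\<dots> = Suc (length c) choose Suc (weight c)" by simp
    finally show ?thesis using True by simp
  next
    case False
    have "rk (map Not (a#c)) + rk (a#c) + 1 = (length c choose Suc (weight (map Not c))) + rk (map Not c) + rk c + 1"
      using False by simp
    also have "\<dots> = (length c choose Suc (weight (map Not c))) + (length c choose weight c)" using Cons by simp
    also have "\<dots> = Suc (length c) choose weight c"
    proof (cases "weight c")
      case 0
      then have "weight (map Not c) = length c" using w by simp
      then show ?thesis using 0 by simp
    next
      case (Suc j)
      then have "Suc (weight (map Not c)) = length c - j" using w by simp
      then have "length c choose Suc (weight (map Not c)) = length c choose j"
        using binomial_symmetric[of j "length c"] Suc wl by simp
      then show ?thesis using Suc by simp
    qed
    finally show ?thesis using False by simp
  qed
qed

lemma card_parity:
  "card {z \<in> bitstrings (Suc m). odd (weight z) = p \<and> \<Phi> (weight z)} =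
   card {z \<in> bitstrings m. \<Phi> (weight z + (if odd (weight z) = p then 0 else 1))}"
proof -
  let ?g = "\<lambda>z. z @ [odd (weight z) \<noteq> p]"
  let ?B = "{z \<in> bitstrings m. \<Phi> (weight z + (if odd (weight z) = p then 0 else 1))}"
  have inj: "inj_on ?g ?B" by (rule inj_onI) simp
  have "?g ` ?B = {z \<in> bitstrings (Suc m). odd (weight z) = p \<and> \<Phi> (weight z)}"
  proof
    show "?g ` ?B \<subseteq> {z \<in> bitstrings (Suc m). odd (weight z) = p \<and> \<Phi> (weight z)}"
    proof
      fix y assume "y \<in> ?g ` ?B"
      then obtain z where z: "z \<in> ?B" "y = ?g z" by blast
      show "y \<in> {z \<in> bitstrings (Suc m). odd (weight z) = p \<and> \<Phi> (weight z)}"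
        using z by (cases "odd (weight z) = p") (auto simp: weight_snoc bitstrings_def)
    qed
    show "{z \<in> bitstrings (Suc m). odd (weight z) = p \<and> \<Phi> (weight z)} \<subseteq> ?g ` ?B"
    proof
      fix z assume z: "z \<in> {z \<in> bitstrings (Suc m). odd (weight z) = p \<and> \<Phi> (weight z)}"
      then have "z \<noteq> []" by (auto simp: bitstrings_def)
      then have zz: "z = butlast z @ [last z]" by simp
      let ?z' = "butlast z"
      have wz: "weight z = weight ?z' + (if last z then 1 else 0)" 
        using arg_cong[OF zz, of weight] weight_snoc[of ?z' "last z"] by simp
      have l: "last z = (odd (weight ?z') \<noteq> p)" using z wz by (cases "last z") auto
      have zB: "?z' \<in> ?B" using z wz l by (auto simp: bitstrings_def)
      have e: "?g ?z' = butlast z @ [last z]" using l by simp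
      have gz: "z = ?g ?z'" using trans[OF e zz[symmetric]] by simp
      show "z \<in> ?g ` ?B" by (rule rev_image_eqI[where f="?g", OF zB gz])
    qed
  qed
  then show ?thesis using card_image[OF inj] by simp
qed

lemma card_two: "finite S \<Longrightarrow> card {z \<in> S. P z} = card {z \<in> S. P z \<and> Q z} + card {z \<in> S. P z \<and> \<not> Q z}"
  by (subst card_Un_disjoint[symmetric]) (auto intro: arg_cong[where f=card])

definition cnt :: "nat \<Rightarrow> (nat \<Rightarrow> bool) \<Rightarrow> nat" where
  "cnt m P = card {z \<in> bitstrings m. P (weight z)}"

lemma cnt_two: "cnt m P = cnt m (\<lambda>v. P v \<and> Q v) + cnt m (\<lambda>v. P v \<and> \<not> Q v)"
  unfolding cnt_def by (rule card_two) simp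

lemma cnt_cong: "(\<And>v. P v = Q v) \<Longrightarrow> cnt m P = cnt m Q"
  unfolding cnt_def by presburger

lemma cnt_eq: "cnt m (\<lambda>v. v = k) = m choose k"
  unfolding cnt_def by (rule card_cls)

lemma cnt_True: "cnt m (\<lambda>v. True) = 2^m"
  unfolding cnt_def using card_bitstrings by simp

lemma class_split: assumes "x \<in> bitstrings n"
  shows "card {z \<in> bitstrings n. weight z = weight x \<and> lex_less x z} + rk x + 1 = n choose weight x"
proof -
  have lx: "length x = n" using assms by (simp add: bitstrings_def)
  let ?A = "{z \<in> bitstrings n. weight z = weight x \<and> lex_less x z}"
  let ?B = "{z \<in> bitstrings n. weight z = weight x \<and> lex_less z x}"
  have "n choose weight x = card {z \<in> bitstrings n. weight z = weight x}" by (simp add: card_cls)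
  also have "\<dots> = card {z \<in> bitstrings n. weight z = weight x \<and> lex_less z x} +
      card {z \<in> bitstrings n. weight z = weight x \<and> \<not> lex_less z x}"
    by (rule card_two) simp
  also have "{z \<in> bitstrings n. weight z = weight x \<and> \<not> lex_less z x} = insert x ?A"
  proof
    show "{z \<in> bitstrings n. weight z = weight x \<and> \<not> lex_less z x} \<subseteq> insert x ?A"
    proof
      fix z assume z: "z \<in> {z \<in> bitstrings n. weight z = weight x \<and> \<not> lex_less z x}"
      then have "length z = length x" using lx by (simp add: bitstrings_def)
      then show "z \<in> insert x ?A" using z lex_less_total[of z x] by auto
    qed
    show "insert x ?A \<subseteq> {z \<in> bitstrings n. weight z = weight x \<and> \<not> lex_less z x}"
      using assms lex_less_trans lex_less_irrefl by blast
  qed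
  also have "card (insert x ?A) = Suc (card ?A)" by (rule card_insert_disjoint) auto
  finally show ?thesis unfolding rk_def lx by simp
qed

lemma f_odd: assumes x: "x \<in> bitstrings (Suc m)" and o: "odd (weight x)"
  shows "f_lab (Suc m) x + rk x = cnt m (\<lambda>v. v + 1 < weight x) + (Suc m choose weight x)"
proof -
  let ?w = "weight x"
  have "card {z \<in> bitstrings (Suc m). before z x} =
     card {z \<in> bitstrings (Suc m). before z x \<and> weight z < ?w} + card {z \<in> bitstrings (Suc m). before z x \<and> \<not> weight z < ?w}"
    by (rule card_two) simp
  also have "{z \<in> bitstrings (Suc m). before z x \<and> weight z < ?w} = {z \<in> bitstrings (Suc m). odd (weight z) = True \<and> weight z < ?w}"
    using o by (auto simp: before_def)
  also have "card \<dots> = cnt m (\<lambda>v. v + (if odd v = True then 0 else 1) < ?w)"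
    unfolding cnt_def by (rule card_parity)
  also have "\<dots> = cnt m (\<lambda>v. v + 1 < ?w)" using o by (intro cnt_cong) presburger
  also have "{z \<in> bitstrings (Suc m). before z x \<and> \<not> weight z < ?w} = {z \<in> bitstrings (Suc m). weight z = ?w \<and> lex_less x z}"
    using o by (auto simp: before_def)
  finally have "card {z \<in> bitstrings (Suc m). before z x} = cnt m (\<lambda>v. v + 1 < ?w) + card {z \<in> bitstrings (Suc m). weight z = ?w \<and> lex_less x z}" .
  then show ?thesis using f_lab_card[OF x] class_split[OF x] by simp
qed

lemma f_even: assumes x: "x \<in> bitstrings (Suc m)" and e: "even (weight x)"
  shows "f_lab (Suc m) x = Suc (2^m + cnt m (\<lambda>v. weight x < v) + rk x)"
proof -
  let ?w = "weight x"
  have lx: "length x = Suc m" using x by (simp add: bitstrings_def)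
  have "card {z \<in> bitstrings (Suc m). before z x} =
     card {z \<in> bitstrings (Suc m). before z x \<and> odd (weight z)} + card {z \<in> bitstrings (Suc m). before z x \<and> \<not> odd (weight z)}"
    by (rule card_two) simp
  also have "{z \<in> bitstrings (Suc m). before z x \<and> odd (weight z)} = {z \<in> bitstrings (Suc m). odd (weight z) = True \<and> True}"
    using e by (auto simp: before_def)
  also have "card \<dots> = cnt m (\<lambda>v. True)"
    unfolding cnt_def by (rule card_parity)
  also have "card {z \<in> bitstrings (Suc m). before z x \<and> \<not> odd (weight z)} =
     card {z \<in> bitstrings (Suc m). (before z x \<and> \<not> odd (weight z)) \<and> ?w < weight z} +
     card {z \<in> bitstrings (Suc m). (before z x \<and> \<not> odd (weight z)) \<and> \<not> ?w < weight z}"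
    by (rule card_two) simp
  also have "{z \<in> bitstrings (Suc m). (before z x \<and> \<not> odd (weight z)) \<and> ?w < weight z} =
     {z \<in> bitstrings (Suc m). odd (weight z) = False \<and> ?w < weight z}"
    using e by (auto simp: before_def)
  also have "card \<dots> = cnt m (\<lambda>v. ?w < v + (if odd v = False then 0 else 1))"
    unfolding cnt_def by (rule card_parity)
  also have "\<dots> = cnt m (\<lambda>v. ?w < v)" using e by (intro cnt_cong) presburger
  also have "{z \<in> bitstrings (Suc m). (before z x \<and> \<not> odd (weight z)) \<and> \<not> ?w < weight z} =
     {z \<in> bitstrings (Suc m). weight z = ?w \<and> lex_less z x}"
    using e by (auto simp: before_def)
  also have "card \<dots> = rk x" unfolding rk_def lx ..
  finally show ?thesis using f_lab_card[OF x] cnt_True by simp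
qed

lemma edge_formula:
  assumes x: "x \<in> bitstrings (Suc m)" and y: "y \<in> bitstrings (Suc m)"
    and o: "odd (weight x)" and e: "even (weight y)"
    and wu: "weight y = weight x + 1 \<or> weight x = weight y + 1"
  shows "int (f_lab (Suc m) x + f_lab (Suc m) y) = 2^(Suc m) + 1
     + (if weight y = weight x + 1 then - int (m choose (weight x + 1)) else int (m choose weight x))
     + int (rk y) - int (rk x)"
proof -
  let ?w = "weight x"
  have w1: "?w \<ge> 1" using o by (cases ?w) auto
  have fx: "f_lab (Suc m) x + rk x = cnt m (\<lambda>v. v + 1 < ?w) + (Suc m choose ?w)" by (rule f_odd[OF x o])
  have fy: "f_lab (Suc m) y = Suc (2^m + cnt m (\<lambda>v. weight y < v) + rk y)" by (rule f_even[OF y e])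
  have pas: "Suc m choose ?w = (m choose ?w) + (m choose (?w - 1))"
    using w1 by (cases ?w) auto
  have c1: "cnt m (\<lambda>v. True) = cnt m (\<lambda>v. v + 1 < ?w) + cnt m (\<lambda>v. \<not> v + 1 < ?w)"
    using cnt_two[of m "\<lambda>v. True" "\<lambda>v. v + 1 < ?w"] by simp
  have c2: "cnt m (\<lambda>v. \<not> v + 1 < ?w) = cnt m (\<lambda>v. v = ?w - 1) + cnt m (\<lambda>v. ?w - 1 < v)"
  proof -
    have "cnt m (\<lambda>v. \<not> v + 1 < ?w) = cnt m (\<lambda>v. \<not> v + 1 < ?w \<and> v = ?w - 1) + cnt m (\<lambda>v. \<not> v + 1 < ?w \<and> v \<noteq> ?w - 1)"
      by (rule cnt_two)
    also have "cnt m (\<lambda>v. \<not> v + 1 < ?w \<and> v = ?w - 1) = cnt m (\<lambda>v. v = ?w - 1)" using w1 by (intro cnt_cong) auto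
    also have "cnt m (\<lambda>v. \<not> v + 1 < ?w \<and> v \<noteq> ?w - 1) = cnt m (\<lambda>v. ?w - 1 < v)" using w1 by (intro cnt_cong) auto
    finally show ?thesis .
  qed
  show ?thesis
  proof (cases "weight y = ?w + 1")
    case True
    have c3: "cnt m (\<lambda>v. ?w - 1 < v) = cnt m (\<lambda>v. v = ?w) + cnt m (\<lambda>v. v = ?w + 1) + cnt m (\<lambda>v. ?w + 1 < v)"
    proof -
      have "cnt m (\<lambda>v. ?w - 1 < v) = cnt m (\<lambda>v. ?w - 1 < v \<and> v = ?w) + cnt m (\<lambda>v. ?w - 1 < v \<and> v \<noteq> ?w)"
        by (rule cnt_two)
      also have "cnt m (\<lambda>v. ?w - 1 < v \<and> v = ?w) = cnt m (\<lambda>v. v = ?w)" using w1 by (intro cnt_cong) auto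
      also have "cnt m (\<lambda>v. ?w - 1 < v \<and> v \<noteq> ?w) = cnt m (\<lambda>v. (?w - 1 < v \<and> v \<noteq> ?w) \<and> v = ?w + 1) + cnt m (\<lambda>v. (?w - 1 < v \<and> v \<noteq> ?w) \<and> v \<noteq> ?w + 1)"
        by (rule cnt_two)
      also have "cnt m (\<lambda>v. (?w - 1 < v \<and> v \<noteq> ?w) \<and> v = ?w + 1) = cnt m (\<lambda>v. v = ?w + 1)" using w1 by (intro cnt_cong) auto
      also have "cnt m (\<lambda>v. (?w - 1 < v \<and> v \<noteq> ?w) \<and> v \<noteq> ?w + 1) = cnt m (\<lambda>v. ?w + 1 < v)" using w1 by (intro cnt_cong) auto
      finally show ?thesis by simp
    qed
    have "f_lab (Suc m) x + f_lab (Suc m) y + rk x + (m choose (?w + 1)) = 2^(Suc m) + 1 + rk y"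
      using fx fy pas c1 c2 c3 cnt_True[of m] cnt_eq[of m] True by simp
    then have "int (f_lab (Suc m) x + f_lab (Suc m) y) + int (rk x) + int (m choose (?w + 1)) = 2^(Suc m) + 1 + int (rk y)"
      using arg_cong[of _ _ int] by fastforce
    then show ?thesis using True by simp
  next
    case False
    then have F: "weight y = ?w - 1" using wu by auto
    have "f_lab (Suc m) x + f_lab (Suc m) y + rk x = 2^(Suc m) + 1 + (m choose ?w) + rk y"
      using fx fy pas c1 c2 cnt_True[of m] cnt_eq[of m] F by simp
    then have "int (f_lab (Suc m) x + f_lab (Suc m) y) + int (rk x) = 2^(Suc m) + 1 + int (m choose ?w) + int (rk y)"
      using arg_cong[of _ _ int] by fastforce
    then show ?thesis using False by simp
  qed
qed

definition dset :: "bool list \<Rightarrow> bool list \<Rightarrow> nat set" where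
  "dset c d = {i. i < length c \<and> c!i \<noteq> d!i}"

lemma dset_Cons: "dset (a#c) (b#d) = (if a \<noteq> b then {0} else {}) \<union> Suc ` dset c d"
proof
  show "dset (a#c) (b#d) \<subseteq> (if a \<noteq> b then {0} else {}) \<union> Suc ` dset c d"
  proof
    fix i assume i: "i \<in> dset (a#c) (b#d)"
    show "i \<in> (if a \<noteq> b then {0} else {}) \<union> Suc ` dset c d"
    proof (cases i)
      case 0 then show ?thesis using i by (simp add: dset_def)
    next
      case (Suc j)
      then have "j \<in> dset c d" using i by (simp add: dset_def)
      then show ?thesis using Suc by blast
    qed
  qed
  show "(if a \<noteq> b then {0} else {}) \<union> Suc ` dset c d \<subseteq> dset (a#c) (b#d)"
    by (auto simp: dset_def)
qed

lemma finite_dset[simp]: "finite (dset c d)" unfolding dset_def by simp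

lemma card_dset_Cons: "card (dset (a#c) (b#d)) = (if a \<noteq> b then 1 else 0) + card (dset c d)"
proof -
  have "card ((if a \<noteq> b then {0} else {}) \<union> Suc ` dset c d) = card (if a \<noteq> b then {0::nat} else {}) + card (Suc ` dset c d)"
    by (rule card_Un_disjoint) auto
  then show ?thesis by (simp add: dset_Cons card_image)
qed

lemma dset_empty: "length c = length d \<Longrightarrow> card (dset c d) = 0 \<longleftrightarrow> c = d"
  unfolding dset_def by (auto intro: nth_equalityI)

lemma adj_def2: "cube_adj c d \<longleftrightarrow> length c = length d \<and> card (dset c d) = 1"
  unfolding cube_adj_def dset_def by simp

lemma adj_Cons: "cube_adj (a#c) (b#d) \<longleftrightarrow> length c = length d \<and> ((a = b \<and> cube_adj c d) \<or> (a \<noteq> b \<and> c = d))"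
  unfolding adj_def2 card_dset_Cons using dset_empty[of c d] by auto

lemma adj_Nil1: "\<not> cube_adj [] d" unfolding adj_def2 dset_def by simp

lemma adj_sym: "cube_adj c d \<Longrightarrow> cube_adj d c"
proof -
  assume a: "cube_adj c d"
  then have l: "length c = length d" by (simp add: cube_adj_def)
  have "{i. i < length d \<and> d!i \<noteq> c!i} = {i. i < length c \<and> c!i \<noteq> d!i}" using l by auto
  then show ?thesis using a l by (simp add: cube_adj_def)
qed

lemma adj_Not: "cube_adj c d \<Longrightarrow> cube_adj (map Not c) (map Not d)"
proof -
  assume a: "cube_adj c d"
  then have l: "length c = length d" by (simp add: cube_adj_def)
  have "{i. i < length (map Not c) \<and> map Not c!i \<noteq> map Not d!i} = {i. i < length c \<and> c!i \<noteq> d!i}" using l by auto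
  then show ?thesis using a l by (simp add: cube_adj_def)
qed

lemma adj_weight: "cube_adj c d \<Longrightarrow> weight d = weight c + 1 \<or> weight c = weight d + 1"
proof (induction c arbitrary: d)
  case Nil then show ?case using adj_Nil1 by blast
next
  case (Cons a c)
  obtain b d' where d: "d = b # d'" using Cons.prems by (cases d) (auto simp: cube_adj_def)
  have "length c = length d' \<and> ((a = b \<and> cube_adj c d') \<or> (a \<noteq> b \<and> c = d'))"
    using Cons.prems d adj_Cons by simp
  then show ?case using Cons.IH d by (cases a; cases b) auto
qed

lemma adj_length: "cube_adj c d \<Longrightarrow> length c = length d" by (simp add: cube_adj_def)

lemma str_ge: assumes "u \<in> bitstrings m" "v \<in> bitstrings m" "cube_adj u v"
  shows "f u + f v \<le> cube_str f m"
proof -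
  have fin: "finite {f u + f v | u v. u \<in> bitstrings m \<and> v \<in> bitstrings m \<and> cube_adj u v}"
  proof (rule finite_subset)
    show "{f u + f v | u v. u \<in> bitstrings m \<and> v \<in> bitstrings m \<and> cube_adj u v} \<subseteq> (\<lambda>(u,v). f u + f v) ` (bitstrings m \<times> bitstrings m)"
      by auto
  qed simp
  show ?thesis unfolding cube_str_def by (rule Max_ge[OF fin]) (use assms in blast)
qed

lemma binom_central: "m choose k \<le> m choose nat \<lceil>real m / 2\<rceil>"
proof -
  have c: "nat \<lceil>real m / 2\<rceil> = m - m div 2"
  proof (cases "even m")
    case True
    then obtain t where "m = 2*t" by blast
    then show ?thesis by simp
  next
    case False
    then obtain t where t: "m = 2*t+1" using oddE by blast
    have "\<lceil>real m / 2\<rceil> = int t + 1"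
      by (rule ceiling_unique) (use t in auto)
    then show ?thesis using t by simp
  qed
  have "m choose (m - m div 2) = m choose (m div 2)"
    using binomial_symmetric[of "m div 2" m] by simp
  then show ?thesis using c binomial_maximum[of m k] by simp
qed

lemma weight_rep[simp]: "weight (replicate k False) = 0" by (induction k) auto
lemma rk_rep[simp]: "rk (replicate k False) = 0" by (induction k) auto

lemma bs_Cons[simp]: "(a # z \<in> bitstrings (Suc m)) = (z \<in> bitstrings m)" by (simp add: bitstrings_def)
lemma bs_map_Not[simp]: "(map Not z \<in> bitstrings m) = (z \<in> bitstrings m)" by (simp add: bitstrings_def)

lemma pascal: "Suc m choose Suc k = (m choose k) + (m choose Suc k)" by simp

lemma sym_binom: "k \<le> p \<Longrightarrow> p choose (p - k) = p choose k"
  using binomial_symmetric[of k p] by simp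

lemma finish:
  fixes F F' cs Mp Mq :: nat and S0 S1 :: int
  assumes "int F = 2^(Suc (Suc (Suc p))) + 1 + S0" "int F' = 2^(Suc p) + 1 + S1" "F' \<le> cs"
    "S0 - S1 \<le> int Mp + int Mq"
  shows "int F \<le> int cs + 3*2^(Suc p) + int Mp + int Mq"
proof -
  have "(2::int)^(Suc (Suc (Suc p))) = 4 * 2^(Suc p)" by simp
  then show ?thesis using assms by linarith
qed

context
  fixes p :: nat and Mp Mq :: nat
  assumes Mp: "\<And>k. p choose k \<le> Mp" and Mq: "\<And>k. Suc p choose k \<le> Mq"
begin

lemma case00:
  assumes c: "c \<in> bitstrings (Suc p)" and d: "d \<in> bitstrings (Suc p)" and adj: "cube_adj c d"
    and o: "odd (weight c)"
  shows "int (f_lab (Suc (Suc (Suc p))) (False#False#c) + f_lab (Suc (Suc (Suc p))) (False#False#d))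
     \<le> int (cube_str (f_lab (Suc p)) (Suc p)) + 3*2^(Suc p) + int Mp + int Mq"
proof -
  have wu: "weight d = weight c + 1 \<or> weight c = weight d + 1" using adj_weight[OF adj] .
  have e: "even (weight d)" using wu o by auto
  have adj0: "cube_adj (False#False#c) (False#False#d)" using adj adj_length[OF adj] by (simp add: adj_Cons)
  have E0: "int (f_lab (Suc (Suc (Suc p))) (False#False#c) + f_lab (Suc (Suc (Suc p))) (False#False#d)) =
     2^(Suc (Suc (Suc p))) + 1 + ((if weight d = weight c + 1 then - int (Suc (Suc p) choose (weight c + 1)) else int (Suc (Suc p) choose weight c)) + int (rk d) - int (rk c))"
    using edge_formula[of "False#False#c" "Suc (Suc p)" "False#False#d"] c d o e wu by simp
  have E1: "int (f_lab (Suc p) c + f_lab (Suc p) d) =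
     2^(Suc p) + 1 + ((if weight d = weight c + 1 then - int (p choose (weight c + 1)) else int (p choose weight c)) + int (rk d) - int (rk c))"
    using edge_formula[of c p d] c d o e wu by simp
  have S: "f_lab (Suc p) c + f_lab (Suc p) d \<le> cube_str (f_lab (Suc p)) (Suc p)"
    by (rule str_ge[OF c d adj])
  obtain w' where w': "weight c = Suc w'" using o by (cases "weight c") auto
  have D: "(if weight d = weight c + 1 then - int (Suc (Suc p) choose (weight c + 1)) else int (Suc (Suc p) choose weight c))
     - (if weight d = weight c + 1 then - int (p choose (weight c + 1)) else int (p choose weight c)) \<le> int Mp + int Mq"
    using Mp[of w'] Mq[of w'] by (simp add: w')
  show ?thesis by (rule finish[OF E0 E1 S]) (use D in linarith)
qed

lemma case01e:
  assumes c: "c \<in> bitstrings (Suc p)" and d: "d \<in> bitstrings (Suc p)" and adj: "cube_adj c d"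
    and o: "even (weight c)" and po: "odd p"
  shows "int (f_lab (Suc (Suc (Suc p))) (False#True#c) + f_lab (Suc (Suc (Suc p))) (False#True#d))
     \<le> int (cube_str (f_lab (Suc p)) (Suc p)) + 3*2^(Suc p) + int Mp + int Mq"
proof -
  let ?s = "weight c" and ?t = "weight d"
  have wu: "?t = ?s + 1 \<or> ?s = ?t + 1" using adj_weight[OF adj] .
  have e: "odd ?t" using wu o by auto
  have lc: "length c = Suc p" and ld: "length d = Suc p" using c d by (auto simp: bitstrings_def)
  have sl: "?s \<le> Suc p" and tl: "?t \<le> Suc p" using weight_le[of c] weight_le[of d] lc ld by auto
  have nc: "weight (map Not c) = Suc p - ?s" using weight_Not[of c] lc by simp
  have nd: "weight (map Not d) = Suc p - ?t" using weight_Not[of d] lc ld by simp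
  have rc: "int (rk (map Not c)) + int (rk c) + 1 = int (Suc p choose ?s)" using rk_Not[of c] lc by simp
  have rd: "int (rk (map Not d)) + int (rk d) + 1 = int (Suc p choose ?t)" using rk_Not[of d] ld by simp
  have ond: "odd (weight (map Not d))" using nd e po tl by presburger
  have enc: "even (weight (map Not c))" using nc o po sl by presburger
  have wu': "weight (map Not c) = weight (map Not d) + 1 \<or> weight (map Not d) = weight (map Not c) + 1"
    using wu nc nd sl tl by auto
  have adj1: "cube_adj (map Not d) (map Not c)" using adj_Not[OF adj_sym[OF adj]] .
  have E0: "int (f_lab (Suc (Suc (Suc p))) (False#True#c) + f_lab (Suc (Suc (Suc p))) (False#True#d)) =
     2^(Suc (Suc (Suc p))) + 1 + ((if ?t = ?s + 1 then - int (Suc (Suc p) choose (?s + 2)) else int (Suc (Suc p) choose Suc ?s))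
       + int (Suc p choose Suc ?t) + int (rk d) - int (Suc p choose Suc ?s) - int (rk c))"
    using edge_formula[of "False#True#c" "Suc (Suc p)" "False#True#d"] c d o e wu lc ld by simp
  have E1: "int (f_lab (Suc p) (map Not d) + f_lab (Suc p) (map Not c)) =
     2^(Suc p) + 1 + ((if weight (map Not c) = weight (map Not d) + 1 then - int (p choose (weight (map Not d) + 1)) else int (p choose weight (map Not d)))
       + int (rk (map Not c)) - int (rk (map Not d)))"
    using edge_formula[of "map Not d" p "map Not c"] c d ond enc wu' by simp
  have S: "f_lab (Suc p) (map Not d) + f_lab (Suc p) (map Not c) \<le> cube_str (f_lab (Suc p)) (Suc p)"
    by (rule str_ge) (use c d adj1 in auto)
  show ?thesis
  proof (cases "?t = ?s + 1")
    case True
    have D: "(if ?t = ?s + 1 then - int (Suc (Suc p) choose (?s + 2)) else int (Suc (Suc p) choose Suc ?s))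
       + int (Suc p choose Suc ?t) + int (rk d) - int (Suc p choose Suc ?s) - int (rk c)
       - ((if weight (map Not c) = weight (map Not d) + 1 then - int (p choose (weight (map Not d) + 1)) else int (p choose weight (map Not d)))
       + int (rk (map Not c)) - int (rk (map Not d))) \<le> int Mp + int Mq"
      using True nc nd sl rc rd Mp[of "Suc p - ?t + 1"] by simp
    show ?thesis by (rule finish[OF E0 E1 S D])
  next
    case False
    then have st: "?s = ?t + 1" using wu by simp
    then obtain s2 where s2: "?s = Suc (Suc s2)" using o e by (cases ?s; cases "?s - 1") auto
    have sy: "p choose (p - s2) = p choose s2" using s2 sl by (intro sym_binom) simp
    have D: "(if ?t = ?s + 1 then - int (Suc (Suc p) choose (?s + 2)) else int (Suc (Suc p) choose Suc ?s))
       + int (Suc p choose Suc ?t) + int (rk d) - int (Suc p choose Suc ?s) - int (rk c)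
       - ((if weight (map Not c) = weight (map Not d) + 1 then - int (p choose (weight (map Not d) + 1)) else int (p choose weight (map Not d)))
       + int (rk (map Not c)) - int (rk (map Not d))) \<le> int Mp + int Mq"
    proof -
      have nd': "weight (map Not d) = p - s2" using nd st s2 by simp
      have nc': "weight (map Not c) \<noteq> weight (map Not d) + 1" using nc nd st sl by simp
      have pt: "Suc p choose ?t = (p choose s2) + (p choose Suc s2)"
      proof -
        have "?t = Suc s2" using st s2 by simp
        then show ?thesis by simp
      qed
      show ?thesis using False nc' nd' sy rc rd st s2 pt Mp[of "Suc s2"] Mq[of "Suc (Suc s2)"] by simp
    qed
    show ?thesis by (rule finish[OF E0 E1 S D])
  qed
qed

lemma sym_Suc: "k \<le> p \<Longrightarrow> p choose Suc (p - k) = (if k = 0 then 0 else p choose (k - 1))"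
proof (cases k)
  case (Suc j)
  assume "k \<le> p"
  then have "Suc (p - k) = p - j" using Suc by simp
  then show ?thesis using sym_binom[of j p] Suc \<open>k \<le> p\<close> by simp
qed simp

lemma case01o:
  assumes c: "c \<in> bitstrings (Suc p)" and d: "d \<in> bitstrings (Suc p)" and adj: "cube_adj c d"
    and o: "even (weight c)" and pe: "even p"
  shows "int (f_lab (Suc (Suc (Suc p))) (False#True#c) + f_lab (Suc (Suc (Suc p))) (False#True#d))
     \<le> int (cube_str (f_lab (Suc p)) (Suc p)) + 3*2^(Suc p) + int Mp + int Mq"
proof -
  obtain a' c1 where cc: "c = a' # c1" using c by (cases c) (auto simp: bitstrings_def)
  obtain b' d1 where dd: "d = b' # d1" using d by (cases d) (auto simp: bitstrings_def)
  have c1: "c1 \<in> bitstrings p" and d1: "d1 \<in> bitstrings p" using c d cc dd by auto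
  have lc1: "length c1 = p" and ld1: "length d1 = p" using c1 d1 by (auto simp: bitstrings_def)
  let ?s = "weight c" and ?t = "weight d"
  let ?s1 = "weight c1" and ?t1 = "weight d1"
  have s1l: "?s1 \<le> p" and t1l: "?t1 \<le> p" using weight_le[of c1] weight_le[of d1] lc1 ld1 by auto
  have wu: "?t = ?s + 1 \<or> ?s = ?t + 1" using adj_weight[OF adj] .
  have e: "odd ?t" using wu o by auto
  have lc: "length c = Suc p" and ld: "length d = Suc p" using c d by (auto simp: bitstrings_def)
  have ws: "?s = (if a' then Suc ?s1 else ?s1)" and wt: "?t = (if b' then Suc ?t1 else ?t1)" using cc dd by auto
  have rkc: "rk c = (if a' then p choose Suc ?s1 else 0) + rk c1" using cc lc1 by (cases a') auto
  have rkd: "rk d = (if b' then p choose Suc ?t1 else 0) + rk d1" using dd ld1 by (cases b') auto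
  define pc where "pc = a' # map Not c1"
  define pd where "pd = b' # map Not d1"
  have pc: "pc \<in> bitstrings (Suc p)" and pd: "pd \<in> bitstrings (Suc p)" using c1 d1 by (auto simp: pc_def pd_def)
  have nc1: "weight (map Not c1) = p - ?s1" using weight_Not[of c1] lc1 by simp
  have nd1: "weight (map Not d1) = p - ?t1" using weight_Not[of d1] ld1 by simp
  have wpc: "weight pc = (if a' then Suc (p - ?s1) else p - ?s1)" using nc1 by (simp add: pc_def)
  have wpd: "weight pd = (if b' then Suc (p - ?t1) else p - ?t1)" using nd1 by (simp add: pd_def)
  have rc1: "int (rk (map Not c1)) + int (rk c1) + 1 = int (p choose ?s1)" using rk_Not[of c1] lc1 by simp
  have rd1: "int (rk (map Not d1)) + int (rk d1) + 1 = int (p choose ?t1)" using rk_Not[of d1] ld1 by simp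
  have rpc: "rk pc = (if a' then p choose Suc (p - ?s1) else 0) + rk (map Not c1)"
    using nc1 lc1 by (cases a') (auto simp: pc_def)
  have rpd: "rk pd = (if b' then p choose Suc (p - ?t1) else 0) + rk (map Not d1)"
    using nd1 ld1 by (cases b') (auto simp: pd_def)
  have adjc: "(a' = b' \<and> cube_adj c1 d1) \<or> (a' \<noteq> b' \<and> c1 = d1)" using adj cc dd adj_Cons by simp
  have adj1: "cube_adj pd pc"
    using adjc adj_Not[of d1 c1] adj_sym[of c1 d1] lc1 ld1 by (auto simp: pc_def pd_def adj_Cons)
  have opd: "odd (weight pd)"
  proof (cases b')
    case True
    then have "weight pd = Suc (p - ?t1)" "?t = Suc ?t1" using wpd wt by simp_all
    then show ?thesis using e pe t1l by presburger
  next
    case False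
    then have "weight pd = p - ?t1" "?t = ?t1" using wpd wt by simp_all
    then show ?thesis using e pe t1l by presburger
  qed
  have epc: "even (weight pc)"
  proof (cases a')
    case True
    then have "weight pc = Suc (p - ?s1)" "?s = Suc ?s1" using wpc ws by simp_all
    then show ?thesis using o pe s1l by presburger
  next
    case False
    then have "weight pc = p - ?s1" "?s = ?s1" using wpc ws by simp_all
    then show ?thesis using o pe s1l by presburger
  qed
  have wu': "weight pc = weight pd + 1 \<or> weight pd = weight pc + 1"
    using adj_weight[OF adj1] by auto
  have E0: "int (f_lab (Suc (Suc (Suc p))) (False#True#c) + f_lab (Suc (Suc (Suc p))) (False#True#d)) =
     2^(Suc (Suc (Suc p))) + 1 + ((if ?t = ?s + 1 then - int (Suc (Suc p) choose (?s + 2)) else int (Suc (Suc p) choose Suc ?s))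
       + int (Suc p choose Suc ?t) + int (rk d) - int (Suc p choose Suc ?s) - int (rk c))"
    using edge_formula[of "False#True#c" "Suc (Suc p)" "False#True#d"] c d o e wu lc ld by simp
  have E1: "int (f_lab (Suc p) pd + f_lab (Suc p) pc) =
     2^(Suc p) + 1 + ((if weight pc = weight pd + 1 then - int (p choose (weight pd + 1)) else int (p choose weight pd))
       + int (rk pc) - int (rk pd))"
    using edge_formula[of pd p pc] pc pd opd epc wu' by simp
  have S: "f_lab (Suc p) pd + f_lab (Suc p) pc \<le> cube_str (f_lab (Suc p)) (Suc p)"
    by (rule str_ge[OF pd pc adj1])
  have sy1: "p choose (p - ?s1) = p choose ?s1" using s1l by (rule sym_binom)
  have sy2: "p choose (p - ?t1) = p choose ?t1" using t1l by (rule sym_binom)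
  have sy3: "p choose Suc (p - ?s1) = (if ?s1 = 0 then 0 else p choose (?s1 - 1))" using s1l by (rule sym_Suc)
  have sy4: "p choose Suc (p - ?t1) = (if ?t1 = 0 then 0 else p choose (?t1 - 1))" using t1l by (rule sym_Suc)
  have D: "(if ?t = ?s + 1 then - int (Suc (Suc p) choose (?s + 2)) else int (Suc (Suc p) choose Suc ?s))
       + int (Suc p choose Suc ?t) + int (rk d) - int (Suc p choose Suc ?s) - int (rk c)
       - ((if weight pc = weight pd + 1 then - int (p choose (weight pd + 1)) else int (p choose weight pd))
       + int (rk pc) - int (rk pd)) \<le> int Mp + int Mq"
  proof -
    have w1: "?t1 = ?s1 + 1 \<or> ?s1 = ?t1 + 1" if "cube_adj c1 d1" using adj_weight[OF that] .
    consider (A) "\<not>a'" "\<not>b'" "?t1 = ?s1 + 1" | (B) "\<not>a'" "\<not>b'" "?s1 = ?t1 + 1"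
      | (C) a' b' "?t1 = ?s1 + 1" | (D) a' b' "?s1 = ?t1 + 1" | (E) a' "\<not>b'" "c1 = d1" | (F) "\<not>a'" b' "c1 = d1"
      using adjc w1 by blast
    then show ?thesis
    proof cases
      case A
      have br: "(weight pc = weight pd + 1)" using A wpc wpd s1l t1l by auto
      show ?thesis using A br ws wt rkc rkd wpc wpd rc1 rd1 rpc rpd sy1 sy2 sy3 sy4 s1l t1l
        Mp[of ?s1] Mp[of ?t1] Mq[of ?s1] Mq[of ?t1] Mq[of "Suc ?s1"] Mq[of "Suc ?t1"] by simp
    next
      case B
      have br: "\<not> (weight pc = weight pd + 1)" using B wpc wpd s1l t1l by auto
      show ?thesis using B br ws wt rkc rkd wpc wpd rc1 rd1 rpc rpd sy1 sy2 sy3 sy4 s1l t1l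
        Mp[of ?s1] Mp[of ?t1] Mq[of ?s1] Mq[of ?t1] Mq[of "Suc ?s1"] Mq[of "Suc ?t1"] by simp
    next
      case C
      have br: "(weight pc = weight pd + 1)" using C wpc wpd s1l t1l by auto
      show ?thesis using C br ws wt rkc rkd wpc wpd rc1 rd1 rpc rpd sy1 sy2 sy3 sy4 s1l t1l
        Mp[of ?s1] Mp[of ?t1] Mq[of ?s1] Mq[of ?t1] Mq[of "Suc ?s1"] Mq[of "Suc ?t1"] by simp
    next
      case D
      have br: "\<not> (weight pc = weight pd + 1)" using D wpc wpd s1l t1l by auto
      show ?thesis using D br ws wt rkc rkd wpc wpd rc1 rd1 rpc rpd sy1 sy2 sy3 sy4 s1l t1l
        Mp[of ?s1] Mp[of ?t1] Mq[of ?s1] Mq[of ?t1] Mq[of "Suc ?s1"] Mq[of "Suc ?t1"] by simp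
    next
      case E
      have br: "(weight pc = weight pd + 1)" using E wpc wpd s1l t1l by auto
      show ?thesis using E br ws wt rkc rkd wpc wpd rc1 rd1 rpc rpd sy1 sy2 sy3 sy4 s1l t1l
        Mp[of ?s1] Mp[of ?t1] Mq[of ?s1] Mq[of ?t1] Mq[of "Suc ?s1"] Mq[of "Suc ?t1"] by simp
    next
      case F
      have br: "\<not> (weight pc = weight pd + 1)" using F wpc wpd s1l t1l by auto
      show ?thesis using F br ws wt rkc rkd wpc wpd rc1 rd1 rpc rpd sy1 sy2 sy3 sy4 s1l t1l
        Mp[of ?s1] Mp[of ?t1] Mq[of ?s1] Mq[of ?t1] Mq[of "Suc ?s1"] Mq[of "Suc ?t1"] by simp
    qed
  qed
  show ?thesis by (rule finish[OF E0 E1 S D])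
qed

lemma casek1:
  assumes c: "c \<in> bitstrings (Suc p)" and ab: "a \<noteq> b"
    and o: "odd (weight (False#a#c))"
  shows "int (f_lab (Suc (Suc (Suc p))) (False#a#c) + f_lab (Suc (Suc (Suc p))) (False#b#c))
     \<le> int (cube_str (f_lab (Suc p)) (Suc p)) + 3*2^(Suc p) + int Mp + int Mq"
proof -
  have lc: "length c = Suc p" using c by (simp add: bitstrings_def)
  let ?x' = "True # replicate p False" and ?y' = "False # replicate p False"
  have xb: "?x' \<in> bitstrings (Suc p)" and yb: "?y' \<in> bitstrings (Suc p)" by (auto simp: bitstrings_def)
  have adj1: "cube_adj ?x' ?y'" by (simp add: adj_Cons)
  have E1: "int (f_lab (Suc p) ?x' + f_lab (Suc p) ?y') = 2^(Suc p) + 1 + 0"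
    using edge_formula[of ?x' p ?y'] xb yb by simp
  have S: "f_lab (Suc p) ?x' + f_lab (Suc p) ?y' \<le> cube_str (f_lab (Suc p)) (Suc p)"
    by (rule str_ge[OF xb yb adj1])
  show ?thesis
  proof (cases a)
    case False
    then have b: b using ab by simp
    have E0: "int (f_lab (Suc (Suc (Suc p))) (False#a#c) + f_lab (Suc (Suc (Suc p))) (False#b#c)) =
      2^(Suc (Suc (Suc p))) + 1 + (- int (Suc (Suc p) choose (weight c + 1)) + int (Suc p choose Suc (weight c)))"
      using edge_formula[of "False#a#c" "Suc (Suc p)" "False#b#c"] c o False b lc by simp
    show ?thesis by (rule finish[OF E0 E1 S]) simp
  next
    case True
    then have b: "\<not> b" using ab by simp
    have E0: "int (f_lab (Suc (Suc (Suc p))) (False#a#c) + f_lab (Suc (Suc (Suc p))) (False#b#c)) =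
      2^(Suc (Suc (Suc p))) + 1 + (int (Suc (Suc p) choose Suc (weight c)) - int (Suc p choose Suc (weight c)))"
      using edge_formula[of "False#a#c" "Suc (Suc p)" "False#b#c"] c o True b lc by simp
    show ?thesis by (rule finish[OF E0 E1 S]) (use Mq[of "weight c"] in simp)
  qed
qed

lemma main_odd:
  assumes x: "x \<in> bitstrings (Suc (Suc (Suc p)))" and y: "y \<in> bitstrings (Suc (Suc (Suc p)))"
    and adj: "cube_adj x y" and x0: "x!0 = False" and y0: "y!0 = False" and o: "odd (weight x)"
  shows "int (f_lab (Suc (Suc (Suc p))) x + f_lab (Suc (Suc (Suc p))) y)
     \<le> int (cube_str (f_lab (Suc p)) (Suc p)) + 3*2^(Suc p) + int Mp + int Mq"
proof -
  obtain a c where xx: "x = False # a # c" using x x0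
    by (cases x; cases "tl x") (auto simp: bitstrings_def)
  obtain b d where yy: "y = False # b # d" using y y0
    by (cases y; cases "tl y") (auto simp: bitstrings_def)
  have c: "c \<in> bitstrings (Suc p)" and d: "d \<in> bitstrings (Suc p)" using x y xx yy by auto
  have ad: "(a = b \<and> cube_adj c d) \<or> (a \<noteq> b \<and> c = d)" using adj xx yy by (simp add: adj_Cons)
  show ?thesis
  proof (cases "a = b")
    case False
    then have "c = d" using ad by simp
    then show ?thesis using casek1[OF c False] o xx yy by simp
  next
    case True
    then have adcd: "cube_adj c d" using ad by simp
    show ?thesis
    proof (cases a)
      case False
      then show ?thesis using case00[OF c d adcd] o xx yy True by simp
    next
      case a: True
      have ec: "even (weight c)" using o xx a by simp
      show ?thesis
      proof (cases "even p")
        case True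
        then show ?thesis using case01o[OF c d adcd ec True] xx yy a \<open>a = b\<close> by simp
      next
        case False
        then show ?thesis using case01e[OF c d adcd ec] xx yy a \<open>a = b\<close> by simp
      qed
    qed
  qed
qed

end

theorem theorem2p4:
  fixes n :: nat and x y :: "bool list"
  assumes "n \<ge> 5"
    and "x \<in> bitstrings n" and "y \<in> bitstrings n" and "cube_adj x y"
    and "f_lab n x + f_lab n y = cube_str (f_lab n) n"
    and "x ! 0 = False" and "y ! 0 = False"
  shows "cube_str (f_lab n) n \<le> cube_str (f_lab (n-2)) (n-2) + 3 * 2^(n-2)
           + ((n-3) choose (nat \<lceil>real (n-3) / 2\<rceil>))
           + ((n-2) choose (nat \<lceil>real (n-2) / 2\<rceil>))"
proof -
  define p where "p = n - 3"
  have np: "n = Suc (Suc (Suc p))" using assms(1) unfolding p_def by simp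
  define Mp where "Mp = p choose (nat \<lceil>real p / 2\<rceil>)"
  define Mq where "Mq = Suc p choose (nat \<lceil>real (Suc p) / 2\<rceil>)"
  have Mp: "\<And>k. p choose k \<le> Mp" unfolding Mp_def by (rule binom_central)
  have Mq: "\<And>k. Suc p choose k \<le> Mq" unfolding Mq_def by (rule binom_central)
  have x: "x \<in> bitstrings (Suc (Suc (Suc p)))" and y: "y \<in> bitstrings (Suc (Suc (Suc p)))"
    using assms np by auto
  have H: "int (f_lab (Suc (Suc (Suc p))) x + f_lab (Suc (Suc (Suc p))) y)
     \<le> int (cube_str (f_lab (Suc p)) (Suc p)) + 3*2^(Suc p) + int Mp + int Mq"
  proof (cases "odd (weight x)")
    case True
    then show ?thesis using main_odd[OF Mp Mq x y assms(4) assms(6) assms(7)] by simp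
  next
    case False
    then have "odd (weight y)" using adj_weight[OF assms(4)] by auto
    then show ?thesis using main_odd[OF Mp Mq y x adj_sym[OF assms(4)] assms(7) assms(6)] by simp
  qed
  then have "int (f_lab (Suc (Suc (Suc p))) x + f_lab (Suc (Suc (Suc p))) y)
     \<le> int (cube_str (f_lab (Suc p)) (Suc p) + 3*2^(Suc p) + Mp + Mq)" by simp
  then have "f_lab (Suc (Suc (Suc p))) x + f_lab (Suc (Suc (Suc p))) y
     \<le> cube_str (f_lab (Suc p)) (Suc p) + 3*2^(Suc p) + Mp + Mq" by (simp only: of_nat_le_iff)
  then show ?thesis using assms(5) np by (simp add: Mp_def Mq_def)
qed

end
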